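(* Let $b(\lambda)=\frac14\lambda^4+\frac12p\lambda^2+q\lambda$ with $p<0$, $q\in\mathbb{R}$, let $b^*(\eta)=\sup_{\lambda}[\eta\lambda-b(\lambda)]$, and $A(x,r,\eta)=b(x)+b(r)-\eta(x+r)+2b^*(\eta)$. If $|x|=\sqrt{-p}$, then $A(x,-x,\eta)=(\eta-q)h(\eta)$ for a function $h$ satisfying $|h(\eta)|\approx(1+|\eta|)^{1/3}$ for all $\eta\in\mathbb{R}$.
   Context: $X\approx Y$ means $cY\le X\le c^{-1}Y$ for some $c>0$ independent of $\eta$ (it may depend on $p,q$). *)

theory Defs
  imports "HOL-Analysis.Analysis"
begin

definition bfun :: "real \<Rightarrow> real \<Rightarrow> real \<Rightarrow> real" where
  "bfun p q l = l ^ 4 / 4 + p * l ^ 2 / 2 + q * l"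

definition bstar :: "real \<Rightarrow> real \<Rightarrow> real \<Rightarrow> real" where
  "bstar p q \<eta> = (SUP l. \<eta> * l - bfun p q l)"

definition Afun :: "real \<Rightarrow> real \<Rightarrow> real \<Rightarrow> real \<Rightarrow> real \<Rightarrow> real" where
  "Afun p q x r \<eta> = bfun p q x + bfun p q r - \<eta> * (x + r) + 2 * bstar p q \<eta>"

end

theory Submission
  imports Defs
begin

lemma s_facts:
  fixes t :: real
  defines "s \<equiv> (1 + (\<bar>t\<bar>)) powr (1/3)"
  shows "s \<ge> 1" "s ^ 3 = 1 + (\<bar>t\<bar>)"
proof -
  show "s \<ge> 1" unfolding s_def by (simp add: ge_one_powr_ge_zero)
  have sp: "s > 0" unfolding s_def by simp
  have "s ^ 3 = s powr (real 3)" using powr_realpow[OF sp, of 3] by simp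
  also have "\<dots> = (1 + \<bar>t\<bar>) powr ((1/3) * real 3)" unfolding s_def by (rule powr_powr)
  also have "\<dots> = 1 + \<bar>t\<bar>" by simp
  finally show "s ^ 3 = 1 + \<bar>t\<bar>" .
qed

lemma upper_pt:
  fixes t l a s :: real
  assumes a: "a > 0" and s1: "s \<ge> 1" and s3: "s ^ 3 = 1 + (\<bar>t\<bar>)"
  shows "t * l - (l^2 - a^2)^2 / 4 \<le> (2*a+2) * s * (\<bar>t\<bar>)"
proof (cases "(\<bar>l\<bar>) \<le> 2*a + 2* s")
  case True
  have "t * l \<le> (\<bar>t\<bar>) * (\<bar>l\<bar>)" by (metis abs_ge_self abs_mult)
  also have "\<dots> \<le> (\<bar>t\<bar>) * (2*a + 2* s)" using True by (simp add: mult_left_mono)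
  also have "\<dots> \<le> (\<bar>t\<bar>) * ((2*a+2)* s)"
    using s1 a by (intro mult_left_mono) (auto simp: algebra_simps)
  finally have "t * l \<le> (\<bar>t\<bar>) * ((2*a+2)* s)" .
  moreover have "0 \<le> (l^2 - a^2)^2 / 4" by simp
  moreover have "(\<bar>t\<bar>) * ((2*a+2)* s) = (2*a+2)* s*(\<bar>t\<bar>)" by simp
  ultimately show ?thesis by linarith
next
  case False
  then have l1: "(\<bar>l\<bar>) > 2*a" and l2: "(\<bar>l\<bar>) > 2* s" using a s1 by auto
  have "l^2 = (\<bar>l\<bar>)^2" by simp
  have "(2*a)^2 < (\<bar>l\<bar>)^2" using l1 a by (intro power_strict_mono) auto
  then have "a^2 < l^2/4" by (simp add: power_mult_distrib)
  then have d: "l^2 - a^2 \<ge> 3/4 * l^2" by simp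
  have "(3/4 * l^2)^2 \<le> (l^2 - a^2)^2" using d by (intro power_mono) auto
  moreover have "(3/4 * l^2)^2 = 9/16 * l^4" by (simp add: power2_eq_square eval_nat_numeral)
  ultimately have e: "(l^2 - a^2)^2 / 4 \<ge> 9/64 * l^4" by simp
  have "(2* s)^3 \<le> (\<bar>l\<bar>)^3" using l2 s1 by (intro power_mono) auto
  then have f: "8 * (1 + (\<bar>t\<bar>)) \<le> (\<bar>l\<bar>)^3" using s3 by (simp add: power_mult_distrib)
  have l4: "l^4 = (\<bar>l\<bar>) * (\<bar>l\<bar>)^3"
  proof -
    have "l^4 = \<bar>l\<bar>^4" by (simp add: power_even_abs_numeral)
    also have "\<bar>l\<bar>^4 = \<bar>l\<bar> * \<bar>l\<bar>^3" by (simp add: power_Suc[symmetric] del: power_Suc)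
    finally show ?thesis .
  qed
  have "(\<bar>l\<bar>) * (8 * (1 + (\<bar>t\<bar>))) \<le> (\<bar>l\<bar>) * (\<bar>l\<bar>)^3" using f by (simp add: mult_left_mono)
  moreover have "8 * (\<bar>t\<bar>) * (\<bar>l\<bar>) \<le> (\<bar>l\<bar>) * (8 * (1 + (\<bar>t\<bar>)))" by (simp add: algebra_simps)
  ultimately have "8 * (\<bar>t\<bar>) * (\<bar>l\<bar>) \<le> l^4" using l4 by linarith
  then have "(\<bar>t\<bar>) * (\<bar>l\<bar>) \<le> l^4 / 8" by simp
  moreover have "0 \<le> l^4" by simp
  ultimately have "(\<bar>t\<bar>) * (\<bar>l\<bar>) \<le> (l^2 - a^2)^2 / 4" using e by linarith
  moreover have "t * l \<le> (\<bar>t\<bar>) * (\<bar>l\<bar>)" by (metis abs_ge_self abs_mult)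
  moreover have "0 \<le> (2*a+2) * s * (\<bar>t\<bar>)" using a s1 by simp
  ultimately show ?thesis by linarith
qed

lemma lower_pt:
  fixes t a s :: real
  assumes a: "a > 0" and s1: "s \<ge> 1" and s3: "s ^ 3 = 1 + (\<bar>t\<bar>)"
  shows "\<exists>l. min (1/4) (a/2) * s * (\<bar>t\<bar>) \<le> t * l - (l^2 - a^2)^2 / 4"
proof -
  define e :: real where "e = (if t < 0 then -1 else 1)"
  have e2: "e^2 = 1" by (simp add: e_def)
  have sg: "t * (e * m) = (\<bar>t\<bar>) * m" for m by (simp add: e_def)
  have at: "t * (e * a) - ((e * a)^2 - a^2)^2/4 = a * (\<bar>t\<bar>)"
    by (simp add: sg power_mult_distrib e2)
  show ?thesis
  proof (cases "(\<bar>t\<bar>) < 1")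
    case True
    then have "s^3 < 2^3" using s3 by simp
    then have "s < 2" using power_less_imp_less_base[of s 3 2] by simp
    then have "min (1/4) (a/2) * s * (\<bar>t\<bar>) \<le> (a/2) * 2 * (\<bar>t\<bar>)"
      using a s1 by (intro mult_right_mono mult_mono) auto
    then have "min (1/4) (a/2) * s * (\<bar>t\<bar>) \<le> t * (e * a) - ((e * a)^2 - a^2)^2/4"
      unfolding at by simp
    then show ?thesis by (rule exI)
  next
    case t1: False
    show ?thesis
    proof (cases "s^2 < 4*a^2")
      case True
      then have "s^2 < (2*a)^2" by (simp add: power_mult_distrib)
      then have "s < 2*a" using power_less_imp_less_base[of s 2 "2*a"] a by simp
      then have "min (1/4) (a/2) * s * (\<bar>t\<bar>) \<le> (1/2) * (2*a) * (\<bar>t\<bar>)"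
        using a s1 by (intro mult_right_mono mult_mono) auto
      then have "min (1/4) (a/2) * s * (\<bar>t\<bar>) \<le> t * (e * a) - ((e * a)^2 - a^2)^2/4"
        unfolding at by simp
      then show ?thesis by (rule exI)
    next
      case False
      define l where "l = e * (s/2)"
      have sq: "l^2 = s^2/4" unfolding l_def by (simp add: power_mult_distrib e2 power_divide)
      have g0: "0 \<le> s^2/4 - a^2" using False by simp
      have "(s^2/4 - a^2)^2 \<le> (s^2/4)^2" using g0 a by (intro power_mono) auto
      moreover have "(s^2/4)^2 = s^4/16" by (simp add: power2_eq_square eval_nat_numeral)
      ultimately have q1: "(l^2 - a^2)^2/4 \<le> s^4/64" unfolding sq by simp
      have "s^4 = s * s^3" by (simp add: power_Suc[symmetric] del: power_Suc)
      then have q2: "s^4 = s * (1 + (\<bar>t\<bar>))" using s3 by simp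
      have q3: "s * (1 + (\<bar>t\<bar>)) \<le> s * (2*(\<bar>t\<bar>))" using t1 s1 by (intro mult_left_mono) auto
      have q4: "(l^2 - a^2)^2/4 \<le> s * (\<bar>t\<bar>) / 32" using q1 q2 q3 by simp
      have q5: "t * l = s * (\<bar>t\<bar>) / 2" unfolding l_def sg by simp
      have q6: "min (1/4) (a/2) * s * (\<bar>t\<bar>) \<le> (1/4) * s * (\<bar>t\<bar>)"
        using s1 by (intro mult_right_mono) auto
      then have q6': "min (1/4) (a/2) * s * (\<bar>t\<bar>) \<le> s * (\<bar>t\<bar>) / 4" by simp
      have q7: "0 \<le> s * (\<bar>t\<bar>)" using s1 by simp
      have "min (1/4) (a/2) * s * (\<bar>t\<bar>) \<le> t * l - (l^2 - a^2)^2 / 4"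
        using q4 q5 q6' q7 by linarith
      then show ?thesis by (rule exI)
    qed
  qed
qed

lemma powr_third_le: "(Q::real) \<ge> 1 \<Longrightarrow> Q powr (1/3) \<le> Q"
  using powr_mono[of "1/3" 1 Q] by simp

lemma r_le_s:
  fixes u v Q :: real
  assumes "1 + u \<le> Q * (1 + v)" "Q \<ge> 1" "u \<ge> 0" "v \<ge> 0"
  shows "(1 + u) powr (1/3) \<le> Q * (1 + v) powr (1/3)"
proof -
  have "(1 + u) powr (1/3) \<le> (Q * (1 + v)) powr (1/3)"
    using assms by (intro powr_mono2) auto
  also have "\<dots> = Q powr (1/3) * (1 + v) powr (1/3)"
    using assms by (simp add: powr_mult)
  also have "\<dots> \<le> Q * (1 + v) powr (1/3)"
    using powr_third_le[OF assms(2)] by (intro mult_right_mono) auto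
  finally show ?thesis .
qed

theorem proposition6p4:
  fixes p q x :: real
  assumes "p < 0"
    and "\<bar>x\<bar> = sqrt (- p)"
  shows "\<exists>h :: real \<Rightarrow> real. \<exists>c > 0.
           (\<forall>\<eta>. Afun p q x (- x) \<eta> = (\<eta> - q) * h \<eta>) \<and>
           (\<forall>\<eta>. c * (1 + \<bar>\<eta>\<bar>) powr (1/3) \<le> \<bar>h \<eta>\<bar> \<and>
                 \<bar>h \<eta>\<bar> \<le> (1 / c) * (1 + \<bar>\<eta>\<bar>) powr (1/3))"
proof -
  define a where "a = sqrt (- p)"
  have a0: "a > 0" using assms(1) by (simp add: a_def)
  have pa: "p = -(a^2)" using assms(1) by (simp add: a_def)
  have xa: "x^2 = a^2" using assms(2) a_def by (metis power2_abs)
  have key: "\<eta> * l - bfun p q l = a^4/4 + ((\<eta> - q) * l - (l^2 - a^2)^2 / 4)" for \<eta> l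
    unfolding bfun_def pa by (simp add: field_simps power2_eq_square eval_nat_numeral)
  have bx: "bfun p q x + bfun p q (- x) = -(a^4) / 2"
  proof -
    have "x^4 = (x^2)^2" by (simp flip: power_mult)
    then have "x^4 = a^4" using xa by (simp flip: power_mult)
    then show ?thesis unfolding bfun_def pa using xa by (simp add: algebra_simps)
  qed
  define c0 where "c0 = min (1/4) (a/2)"
  define K where "K = 2*a + 2"
  have c00: "c0 > 0" using a0 by (simp add: c0_def)
  have K0: "K > 0" using a0 by (simp add: K_def)
  have Ab: "2 * c0 * ((1 + (\<bar>\<eta> - q\<bar>)) powr (1/3)) * (\<bar>\<eta> - q\<bar>) \<le> Afun p q x (- x) \<eta>
         \<and> Afun p q x (- x) \<eta> \<le> 2 * K * ((1 + (\<bar>\<eta> - q\<bar>)) powr (1/3)) * (\<bar>\<eta> - q\<bar>)" for \<eta>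
  proof -
    define t where "t = \<eta> - q"
    define s where "s = (1 + \<bar>t\<bar>) powr (1/3)"
    have s1: "s \<ge> 1" and s3: "s ^ 3 = 1 + \<bar>t\<bar>" using s_facts[of t] by (simp_all add: s_def)
    have ub: "\<eta> * l - bfun p q l \<le> a^4/4 + K * s * \<bar>t\<bar>" for l
      using upper_pt[OF a0 s1 s3, of l] unfolding key t_def K_def by simp
    have bdd: "bdd_above (range (\<lambda>l. \<eta> * l - bfun p q l))"
      using ub by (intro bdd_aboveI2) 
    have U: "bstar p q \<eta> \<le> a^4/4 + K * s * \<bar>t\<bar>"
      unfolding bstar_def by (rule cSUP_least) (use ub in auto)
    obtain l where l: "c0 * s * \<bar>t\<bar> \<le> t * l - (l^2 - a^2)^2 / 4"
      using lower_pt[OF a0 s1 s3] unfolding c0_def by blast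
    have "a^4/4 + c0 * s * \<bar>t\<bar> \<le> \<eta> * l - bfun p q l"
      using l unfolding key t_def by simp
    also have "\<dots> \<le> bstar p q \<eta>" unfolding bstar_def by (rule cSUP_upper[OF _ bdd]) simp
    finally have L: "a^4/4 + c0 * s * \<bar>t\<bar> \<le> bstar p q \<eta>" .
    have "Afun p q x (- x) \<eta> = 2 * (bstar p q \<eta> - a^4/4)"
      unfolding Afun_def using bx by simp
    then show ?thesis using U L unfolding s_def t_def by simp
  qed
  define Q where "Q = 1 + \<bar>q\<bar>"
  have Q1: "Q \<ge> 1" by (simp add: Q_def)
  define c where "c = min (min (2*c0) 1) (1/(2*K)) / Q"
  define h where "h = (\<lambda>\<eta>. if \<eta> = q then 1 else Afun p q x (- x) \<eta> / (\<eta> - q))"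
  have c0': "c > 0" using c00 K0 Q1 by (simp add: c_def)
  have eq: "Afun p q x (- x) \<eta> = (\<eta> - q) * h \<eta>" for \<eta>
  proof (cases "\<eta> = q")
    case True
    then show ?thesis using Ab[of \<eta>] by (simp add: h_def)
  qed (simp add: h_def)
  have bnd: "c * (1 + \<bar>\<eta>\<bar>) powr (1/3) \<le> \<bar>h \<eta>\<bar> \<and> \<bar>h \<eta>\<bar> \<le> (1 / c) * (1 + \<bar>\<eta>\<bar>) powr (1/3)" for \<eta>
  proof -
    define t where "t = \<eta> - q"
    define s where "s = (1 + \<bar>t\<bar>) powr (1/3)"
    define r where "r = (1 + \<bar>\<eta>\<bar>) powr (1/3)"
    have s1: "s \<ge> 1" using s_facts[of t] by (simp add: s_def)
    have r1: "r \<ge> 1" using s_facts[of \<eta>] by (simp add: r_def)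
    have "1 + \<bar>\<eta>\<bar> \<le> Q * (1 + \<bar>t\<bar>)"
      proof -
        have "\<bar>\<eta>\<bar> \<le> \<bar>\<eta> - q\<bar> + \<bar>q\<bar>" by (metis abs_triangle_ineq diff_add_cancel)
        moreover have "0 \<le> abs q * abs (\<eta> - q)" by simp
        moreover have "(1 + \<bar>q\<bar>) * (1 + \<bar>\<eta> - q\<bar>) = 1 + \<bar>\<eta> - q\<bar> + \<bar>q\<bar> + abs q * abs (\<eta> - q)" by (simp add: algebra_simps)
        ultimately show ?thesis unfolding Q_def t_def by linarith
      qed
    then have rs: "r \<le> Q * s" unfolding r_def s_def using Q1 by (intro r_le_s) auto
    have "1 + \<bar>t\<bar> \<le> Q * (1 + \<bar>\<eta>\<bar>)"
      proof -
        have "\<bar>\<eta> - q\<bar> \<le> \<bar>\<eta>\<bar> + \<bar>q\<bar>" by (rule abs_triangle_ineq4)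
        moreover have "0 \<le> abs q * abs \<eta>" by simp
        moreover have "(1 + \<bar>q\<bar>) * (1 + \<bar>\<eta>\<bar>) = 1 + \<bar>\<eta>\<bar> + \<bar>q\<bar> + abs q * abs \<eta>" by (simp add: algebra_simps)
        ultimately show ?thesis unfolding Q_def t_def by linarith
      qed
    then have sr: "s \<le> Q * r" unfolding r_def s_def using Q1 by (intro r_le_s) auto
    have cQ: "c * Q \<le> 2 * c0" "c * Q \<le> 1" "c * Q \<le> 1 / (2*K)"
      using Q1 by (auto simp: c_def)
    have "c \<le> c * Q" using Q1 c0' by simp
    then have c1: "c \<le> 1" using cQ(2) by linarith
    have ic: "2 * K * Q \<le> 1 / c"
      using cQ(3) c0' K0 Q1 by (simp add: field_simps)
    show ?thesis
    proof (cases "\<eta> = q")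
      case True
      then have "r \<le> Q" using rs s_def t_def by simp
      then have "c * r \<le> c * Q" using c0' by (simp add: mult_left_mono)
      then have "c * r \<le> 1" using cQ(2) by linarith
      moreover have "1 \<le> r / c" using r1 c1 c0' by (simp add: field_simps)
      ultimately show ?thesis using True by (simp add: h_def r_def)
    next
      case False
      then have t0: "\<bar>t\<bar> > 0" by (simp add: t_def)
      have A1: "2 * c0 * s * \<bar>t\<bar> \<le> Afun p q x (- x) \<eta>"
        and A2: "Afun p q x (- x) \<eta> \<le> 2 * K * s * \<bar>t\<bar>"
        using Ab[of \<eta>] by (simp_all add: s_def t_def)
      have "0 \<le> 2 * c0 * s * \<bar>t\<bar>" using c00 s1 by simp
      then have A0: "0 \<le> Afun p q x (- x) \<eta>" using A1 by linarith
      have hh: "\<bar>h \<eta>\<bar> = Afun p q x (- x) \<eta> / \<bar>t\<bar>"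
        using False A0 by (simp add: h_def t_def abs_divide)
      have "2 * c0 * s = (2 * c0 * s * \<bar>t\<bar>) / \<bar>t\<bar>" using t0 by simp
      also have "\<dots> \<le> Afun p q x (- x) \<eta> / \<bar>t\<bar>" using A1 t0 by (intro divide_right_mono) auto
      finally have L: "2 * c0 * s \<le> \<bar>h \<eta>\<bar>" using hh by simp
      have "Afun p q x (- x) \<eta> / \<bar>t\<bar> \<le> (2 * K * s * \<bar>t\<bar>) / \<bar>t\<bar>" using A2 t0 by (intro divide_right_mono) auto
      also have "\<dots> = 2 * K * s" using t0 by simp
      finally have U: "\<bar>h \<eta>\<bar> \<le> 2 * K * s" using hh by simp
      have "c * r \<le> c * (Q * s)" using rs c0' by (simp add: mult_left_mono)
      also have "\<dots> = (c * Q) * s" by simp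
      also have "\<dots> \<le> 2 * c0 * s" using cQ(1) s1 by (intro mult_right_mono) auto
      finally have "c * r \<le> \<bar>h \<eta>\<bar>" using L by linarith
      moreover have "2 * K * s \<le> 2 * K * (Q * r)" using sr K0 by simp
      moreover have "2 * K * (Q * r) \<le> (1/c) * r" using ic r1
        by (metis mult.assoc mult_right_mono order_trans zero_le_one)
      ultimately show ?thesis using U by (simp add: r_def)
    qed
  qed
  show ?thesis using eq bnd c0' by blast
qed

end
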